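(* For any disjoint nonempty sets $T,B\subseteq[d]$, the function $\theta\mapsto\log\mathbb{P}_\theta(B\prec T)$ is concave on $\mathbb{R}^d$. Consequently, the order-$M$ rank-breaking log-likelihood $\mathcal{L}_{\rm RB}(\theta)=\sum_{j=1}^n\sum_{a=1}^{\ell_j}\log\mathbb{P}_\theta(e_{j,a})$ is concave in $\theta\in\mathbb{R}^d$ for any collection of edges $e_{j,a}$.
   Context: PL model: items $[d]$, parameter $\theta\in\mathbb{R}^d$; when a set $S$ is offered, a ranking $\sigma:[|S|]\to S$ (position 1 most preferred) is drawn with probability $\prod_{i=1}^{|S|-1}e^{\theta_{\sigma(i)}}/\sum_{i'=i}^{|S|}e^{\theta_{\sigma(i')}}$. For disjoint nonempty $T,B\subseteq[d]$, $\mathbb{P}_\theta(B\prec T)=\sum_{\sigma}\prod_{u=1}^{|T|}\frac{e^{\theta_{\sigma(u)}}}{\sum_{c=u}^{|T|}e^{\theta_{\sigma(c)}}+\sum_{i\in B}e^{\theta_i}}$ (sum over all orderings $\sigma$ of $T$), the PL probability that, when $T\cup B$ is offered, every item of $T$ is ranked above every item of $B$. An edge $e_{j,a}$ is such a pair $(B,T)$ and $\mathbb{P}_\theta(e_{j,a})=\mathbb{P}_\theta(B\prec T)$. *)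

theory Defs
  imports "HOL-Analysis.Analysis" "HOL-Combinatorics.Multiset_Permutations"
begin

text \<open>Items [d] are modelled by a finite type 'd; theta :: real^'d.
  An ordering sigma of T is a distinct list enumerating T (position u = index u, 0-based).
  PL_before theta B T is the PL probability that every item of T is ranked above every item of B.\<close>

definition PL_before :: "real^'d \<Rightarrow> 'd set \<Rightarrow> 'd set \<Rightarrow> real" where
  "PL_before \<theta> B T =
     (\<Sum>\<sigma>\<in>permutations_of_set T.
        \<Prod>u<length \<sigma>. exp (\<theta> $ (\<sigma> ! u)) /
          ((\<Sum>c\<in>{u..<length \<sigma>}. exp (\<theta> $ (\<sigma> ! c))) + (\<Sum>i\<in>B. exp (\<theta> $ i))))"

definition PL_edge :: "real^'d \<Rightarrow> 'd set \<times> 'd set \<Rightarrow> real" where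
  "PL_edge \<theta> e = PL_before \<theta> (fst e) (snd e)"

definition L_RB :: "nat \<Rightarrow> (nat \<Rightarrow> nat) \<Rightarrow> (nat \<Rightarrow> nat \<Rightarrow> 'd set \<times> 'd set) \<Rightarrow> real^'d \<Rightarrow> real" where
  "L_RB n ell e \<theta> = (\<Sum>j=1..n. \<Sum>a=1..ell j. ln (PL_edge \<theta> (e j a)))"

end

theory Submission
  imports Defs
begin


definition W :: "real^'d \<Rightarrow> 'd set \<Rightarrow> real" where
  "W \<theta> A = (\<Sum>i\<in>A. exp (\<theta> $ i))"

definition G :: "real^'d \<Rightarrow> 'd set \<Rightarrow> 'd set \<Rightarrow> real" where
  "G \<theta> B T = (\<Sum>S\<in>Pow T. (-1)^card S * (W \<theta> B / (W \<theta> B + W \<theta> S)))"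

lemma sum_nth_distinct:
  assumes "distinct xs"
  shows "(\<Sum>c\<in>{0..<length xs}. f (xs ! c)) = sum f (set xs)"
  using assms by (simp add: sum.distinct_set_conv_list sum_list_sum_nth)

lemma PL_rec:
  fixes \<theta> :: "real^'d"
  assumes "finite T" "T \<noteq> {}"
  shows "PL_before \<theta> B T = (\<Sum>x\<in>T. exp (\<theta>$x) / (W \<theta> T + W \<theta> B) * PL_before \<theta> B (T - {x}))"
proof -
  define g where "g = (\<lambda>\<sigma>::'d list. \<Prod>u<length \<sigma>. exp (\<theta> $ (\<sigma> ! u)) /
          ((\<Sum>c\<in>{u..<length \<sigma>}. exp (\<theta> $ (\<sigma> ! c))) + (\<Sum>i\<in>B. exp (\<theta> $ i))))"
  have PLg: "PL_before \<theta> B A = sum g (permutations_of_set A)" for A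
    unfolding PL_before_def g_def by simp
  have "sum g (permutations_of_set T) = (\<Sum>x\<in>T. sum g ((\<lambda>xs. x # xs) ` permutations_of_set (T - {x})))"
    unfolding permutations_of_set_nonempty[OF assms(2)]
    by (rule sum.UNION_disjoint) (use assms in auto)
  also have "\<dots> = (\<Sum>x\<in>T. exp (\<theta>$x) / (W \<theta> T + W \<theta> B) * sum g (permutations_of_set (T - {x})))"
  proof (rule sum.cong[OF refl])
    fix x assume x: "x \<in> T"
    have "sum g ((\<lambda>xs. x # xs) ` permutations_of_set (T - {x})) = sum (g \<circ> (\<lambda>xs. x # xs)) (permutations_of_set (T - {x}))"
      by (rule sum.reindex) (auto simp: inj_on_def)
    also have "\<dots> = (\<Sum>\<sigma>\<in>permutations_of_set (T - {x}). exp (\<theta>$x) / (W \<theta> T + W \<theta> B) * g \<sigma>)"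
    proof (rule sum.cong[OF refl])
      fix \<sigma> assume s: "\<sigma> \<in> permutations_of_set (T - {x})"
      hence ds: "distinct \<sigma>" "set \<sigma> = T - {x}" by (auto simp: permutations_of_set_def)
      have sT: "set (x # \<sigma>) = T" "distinct (x#\<sigma>)" using ds x by auto
      have h0: "(\<Sum>c\<in>{0..<length (x#\<sigma>)}. exp (\<theta> $ ((x#\<sigma>) ! c))) = W \<theta> T"
        unfolding W_def using sum_nth_distinct[OF sT(2), of "\<lambda>i. exp (\<theta> $ i)"] sT(1) by simp
      have hs: "(\<Sum>c\<in>{Suc u..<length (x#\<sigma>)}. exp (\<theta> $ ((x#\<sigma>) ! c)))
              = (\<Sum>c\<in>{u..<length \<sigma>}. exp (\<theta> $ (\<sigma> ! c)))" for u
        by (simp add: sum.shift_bounds_Suc_ivl del: sum.op_ivl_Suc)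
      have "(g \<circ> (\<lambda>xs. x # xs)) \<sigma> = exp (\<theta> $ ((x#\<sigma>) ! 0)) /
          ((\<Sum>c\<in>{0..<length (x#\<sigma>)}. exp (\<theta> $ ((x#\<sigma>) ! c))) + (\<Sum>i\<in>B. exp (\<theta> $ i)))
         * (\<Prod>u<length \<sigma>. exp (\<theta> $ ((x#\<sigma>) ! Suc u)) /
          ((\<Sum>c\<in>{Suc u..<length (x#\<sigma>)}. exp (\<theta> $ ((x#\<sigma>) ! c))) + (\<Sum>i\<in>B. exp (\<theta> $ i))))"
        unfolding g_def comp_def by (simp only: length_Cons prod.lessThan_Suc_shift)
      also have "\<dots> = exp (\<theta>$x) / (W \<theta> T + W \<theta> B) * g \<sigma>"
        unfolding h0 hs g_def by (simp add: W_def)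
      finally show "(g \<circ> (\<lambda>xs. x # xs)) \<sigma> = exp (\<theta>$x) / (W \<theta> T + W \<theta> B) * g \<sigma>" .
    qed
    also have "\<dots> = exp (\<theta>$x) / (W \<theta> T + W \<theta> B) * sum g (permutations_of_set (T - {x}))"
      by (simp add: sum_distrib_left)
    finally show "sum g ((\<lambda>xs. x # xs) ` permutations_of_set (T - {x})) = \<dots>" .
  qed
  finally show ?thesis by (simp add: PLg)
qed

lemma W_nonneg: "0 \<le> W \<theta> A" unfolding W_def by (simp add: sum_nonneg)
lemma W_pos: "finite A \<Longrightarrow> A \<noteq> {} \<Longrightarrow> 0 < W \<theta> A" unfolding W_def by (simp add: sum_pos)

lemma sum_Pow_alt: "finite T \<Longrightarrow> T \<noteq> {} \<Longrightarrow> (\<Sum>S\<in>Pow T. (-1::real)^card S) = 0"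
proof -
  assume T: "finite T" "T \<noteq> {}"
  have "(\<Prod>x\<in>T. (-1::real) + 1) = (\<Sum>S\<in>Pow T. (\<Prod>x\<in>S. -1) * (\<Prod>x\<in>T-S. 1))"
    by (rule prod_add[OF T(1)])
  moreover have "(\<Prod>x\<in>T. (-1::real) + 1) = 0" using T by (simp add: card_gt_0_iff)
  ultimately show ?thesis by simp
qed

lemma G_rec:
  fixes \<theta> :: "real^'d"
  assumes T: "finite T" "T \<noteq> {}" and WB: "W \<theta> B > 0"
  shows "G \<theta> B T = (\<Sum>x\<in>T. exp (\<theta>$x) / (W \<theta> T + W \<theta> B) * G \<theta> B (T - {x}))"
proof -
  define f where "f S = (-1::real)^card S * (W \<theta> B / (W \<theta> B + W \<theta> S))" for S
  have GS: "G \<theta> B A = sum f (Pow A)" for A unfolding G_def f_def ..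
  have "(\<Sum>x\<in>T. exp (\<theta>$x) * G \<theta> B (T - {x})) = (\<Sum>x\<in>T. \<Sum>S\<in>{S\<in>Pow T. x \<notin> S}. exp (\<theta>$x) * f S)"
    unfolding GS sum_distrib_left by (intro sum.cong refl) (auto simp: Pow_def)
  also have "\<dots> = (\<Sum>S\<in>Pow T. \<Sum>x\<in>{x\<in>T. x \<notin> S}. exp (\<theta>$x) * f S)"
    by (rule sum.swap_restrict) (use T in auto)
  also have "\<dots> = (\<Sum>S\<in>Pow T. f S * (W \<theta> T - W \<theta> S))"
  proof (intro sum.cong refl)
    fix S assume "S \<in> Pow T"
    hence "S \<subseteq> T" by auto
    hence 1: "W \<theta> (T - S) = W \<theta> T - W \<theta> S" unfolding W_def using T(1) by (simp add: sum_diff)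
    have 2: "{x\<in>T. x \<notin> S} = T - S" by auto
    have 3: "(\<Sum>x\<in>T - S. exp (\<theta>$x) * f S) = f S * W \<theta> (T - S)"
      unfolding W_def sum_distrib_left by (simp add: mult.commute)
    show "(\<Sum>x\<in>{x\<in>T. x \<notin> S}. exp (\<theta>$x) * f S) = f S * (W \<theta> T - W \<theta> S)"
      unfolding 2 3 1 ..
  qed
  finally have e1: "(\<Sum>x\<in>T. exp (\<theta>$x) * G \<theta> B (T - {x})) = (\<Sum>S\<in>Pow T. f S * (W \<theta> T - W \<theta> S))" .
  have "(W \<theta> T + W \<theta> B) * G \<theta> B T - (\<Sum>S\<in>Pow T. f S * (W \<theta> T - W \<theta> S))
      = (\<Sum>S\<in>Pow T. f S * (W \<theta> B + W \<theta> S))"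
    unfolding GS sum_distrib_left sum_subtractf[symmetric] by (intro sum.cong refl) (simp add: algebra_simps)
  also have "\<dots> = (\<Sum>S\<in>Pow T. (-1)^card S) * W \<theta> B"
    unfolding sum_distrib_right
  proof (intro sum.cong refl)
    fix S have "W \<theta> B + W \<theta> S > 0" using WB W_nonneg[of \<theta> S] by linarith
    thus "f S * (W \<theta> B + W \<theta> S) = (-1)^card S * W \<theta> B" unfolding f_def by simp
  qed
  also have "\<dots> = 0" using sum_Pow_alt[OF T] by simp
  finally have "(W \<theta> T + W \<theta> B) * G \<theta> B T = (\<Sum>x\<in>T. exp (\<theta>$x) * G \<theta> B (T - {x}))"
    using e1 by simp
  moreover have "W \<theta> T + W \<theta> B > 0" using WB W_nonneg[of \<theta> T] by linarith
  ultimately show ?thesis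
    by (simp add: sum_divide_distrib[symmetric] field_simps)
qed

lemma PL_eq_G:
  fixes \<theta> :: "real^'d"
  assumes "finite T" and WB: "W \<theta> B > 0"
  shows "PL_before \<theta> B T = G \<theta> B T"
  using assms(1)
proof (induction T rule: finite_psubset_induct)
  case (psubset T)
  show ?case
  proof (cases "T = {}")
    case True
    thus ?thesis using WB by (simp add: PL_before_def G_def W_def)
  next
    case False
    have "PL_before \<theta> B T = (\<Sum>x\<in>T. exp (\<theta>$x) / (W \<theta> T + W \<theta> B) * PL_before \<theta> B (T - {x}))"
      by (rule PL_rec[OF psubset(1) False])
    also have "\<dots> = (\<Sum>x\<in>T. exp (\<theta>$x) / (W \<theta> T + W \<theta> B) * G \<theta> B (T - {x}))"
      by (intro sum.cong refl) (use psubset in auto)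
    also have "\<dots> = G \<theta> B T" by (rule G_rec[OF psubset(1) False WB, symmetric])
    finally show ?thesis .
  qed
qed



lemma exp_int:
  fixes c :: real assumes c: "c > 0"
  shows "integrable lborel (\<lambda>s. exp (s - c * exp s))"
    and "integral\<^sup>L lborel (\<lambda>s. exp (s - c * exp s)) = 1 / c"
proof -
  define F where "F s = - exp (- (c * exp s)) / c" for s
  have D: "DERIV F x :> exp (x - c * exp x)" for x
  proof -
    have "DERIV F x :> - (exp (- (c * exp x)) * (- (c * exp x))) / c"
      unfolding F_def by (auto intro!: derivative_eq_intros)
    moreover have "- (exp (- (c * exp x)) * (- (c * exp x))) / c = exp (x - c * exp x)"
      using c by (simp add: exp_diff exp_minus field_simps)
    ultimately show ?thesis by simp
  qed
  have A: "((F \<circ> real_of_ereal) \<longlongrightarrow> - 1 / c) (at_right (-\<infinity>))"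
  proof -
    have "((\<lambda>x. exp (- (c * exp x))) \<longlongrightarrow> exp (- (c * 0))) at_bot"
      by (intro tendsto_intros exp_at_bot)
    hence "(F \<longlongrightarrow> - exp (- (c * 0)) / c) at_bot"
      unfolding F_def by (intro tendsto_divide tendsto_minus tendsto_const) (use c in auto)
    thus ?thesis unfolding at_right_MInf tendsto_compose_filtermap using c by (simp add: filtermap_filtermap filtermap_ident)
  qed
  have Bl: "((F \<circ> real_of_ereal) \<longlongrightarrow> 0) (at_left \<infinity>)"
  proof -
    have "filterlim (\<lambda>s. c * exp s) at_top at_top"
      by (intro filterlim_tendsto_pos_mult_at_top[OF tendsto_const c exp_at_top])
    hence "filterlim (\<lambda>s. - (c * exp s)) at_bot at_top"
      by (simp add: filterlim_uminus_at_top)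
    hence "((\<lambda>s. exp (- (c * exp s))) \<longlongrightarrow> 0) at_top"
      by (rule filterlim_compose[OF exp_at_bot])
    hence "(F \<longlongrightarrow> - 0 / c) at_top"
      unfolding F_def by (intro tendsto_divide tendsto_minus tendsto_const) (use c in auto)
    thus ?thesis unfolding at_left_PInf tendsto_compose_filtermap by (simp add: filtermap_filtermap filtermap_ident)
  qed
  note ftc = interval_integral_FTC_nonneg[of "-\<infinity>" "\<infinity>" F "\<lambda>s. exp (s - c * exp s)" "-1/c" 0]
  have i: "set_integrable lborel (einterval (-\<infinity>) \<infinity>) (\<lambda>s. exp (s - c * exp s))"
       and v: "(LBINT x=-\<infinity>..\<infinity>. exp (x - c * exp x)) = 0 - (-1/c)"
    by (rule ftc; (use D A Bl in \<open>auto intro!: continuous_intros\<close>))+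
  show "integrable lborel (\<lambda>s. exp (s - c * exp s))"
    using i by (simp add: set_integrable_def)
  show "integral\<^sup>L lborel (\<lambda>s. exp (s - c * exp s)) = 1 / c"
    using v by (simp add: interval_lebesgue_integral_def set_lebesgue_integral_def)
qed



definition psi :: "real^'d \<Rightarrow> 'd set \<Rightarrow> 'd set \<Rightarrow> real \<Rightarrow> real" where
  "psi \<theta> B T s = exp (s - exp s) * (\<Prod>i\<in>T. 1 - exp (- (exp (\<theta> $ i) / W \<theta> B * exp s)))"

lemma psi_expand:
  fixes \<theta> :: "real^'d"
  assumes T: "finite T"
  shows "psi \<theta> B T s = (\<Sum>S\<in>Pow T. (-1)^card S * exp (s - (1 + W \<theta> S / W \<theta> B) * exp s))"
proof -
  have "(\<Prod>i\<in>T. 1 - exp (- (exp (\<theta> $ i) / W \<theta> B * exp s)))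
      = (\<Prod>i\<in>T. (- exp (- (exp (\<theta> $ i) / W \<theta> B * exp s))) + 1)" by simp
  also have "\<dots> = (\<Sum>S\<in>Pow T. (\<Prod>i\<in>S. - exp (- (exp (\<theta> $ i) / W \<theta> B * exp s))) * (\<Prod>i\<in>T-S. 1))"
    by (rule prod_add[OF T])
  also have "\<dots> = (\<Sum>S\<in>Pow T. (-1)^card S * exp (- (W \<theta> S / W \<theta> B * exp s)))"
  proof (intro sum.cong refl)
    fix S assume "S \<in> Pow T"
    have "(\<Prod>i\<in>S. - exp (- (exp (\<theta> $ i) / W \<theta> B * exp s))) = (\<Prod>i\<in>S. (-1) * exp (- (exp (\<theta> $ i) / W \<theta> B * exp s)))"
      by simp
    also have "\<dots> = (-1)^card S * (\<Prod>i\<in>S. exp (- (exp (\<theta> $ i) / W \<theta> B * exp s)))"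
      by (subst prod.distrib) simp
    also have "(\<Prod>i\<in>S. exp (- (exp (\<theta> $ i) / W \<theta> B * exp s))) = exp (\<Sum>i\<in>S. - (exp (\<theta> $ i) / W \<theta> B * exp s))"
      by (simp add: exp_sum)
    also have "(\<Sum>i\<in>S. - (exp (\<theta> $ i) / W \<theta> B * exp s)) = - (W \<theta> S / W \<theta> B * exp s)"
      by (simp add: W_def sum_negf sum_distrib_right sum_divide_distrib)
    finally show "(\<Prod>i\<in>S. - exp (- (exp (\<theta> $ i) / W \<theta> B * exp s))) * (\<Prod>i\<in>T-S. 1)
        = (-1)^card S * exp (- (W \<theta> S / W \<theta> B * exp s))" by simp
  qed
  finally have e: "(\<Prod>i\<in>T. 1 - exp (- (exp (\<theta> $ i) / W \<theta> B * exp s))) = \<dots>" .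
  show ?thesis
    unfolding psi_def e sum_distrib_left
  proof (intro sum.cong refl)
    fix S
    have "exp (s - exp s) * exp (- (W \<theta> S / W \<theta> B * exp s)) = exp (s - (1 + W \<theta> S / W \<theta> B) * exp s)"
      by (simp add: exp_add[symmetric] algebra_simps)
    thus "exp (s - exp s) * ((-1)^card S * exp (- (W \<theta> S / W \<theta> B * exp s)))
        = (-1)^card S * exp (s - (1 + W \<theta> S / W \<theta> B) * exp s)" by (simp add: algebra_simps)
  qed
qed

lemma psi_integral:
  fixes \<theta> :: "real^'d"
  assumes T: "finite T" and WB: "W \<theta> B > 0"
  shows "integrable lborel (psi \<theta> B T)" "integral\<^sup>L lborel (psi \<theta> B T) = G \<theta> B T"
proof -
  have c: "1 + W \<theta> S / W \<theta> B > 0" for S using WB W_nonneg[of \<theta> S] by (simp add: add_pos_nonneg)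
  have eq: "psi \<theta> B T = (\<lambda>s. \<Sum>S\<in>Pow T. (-1)^card S * exp (s - (1 + W \<theta> S / W \<theta> B) * exp s))"
    using psi_expand[OF T] by blast
  show "integrable lborel (psi \<theta> B T)"
    unfolding eq
    apply (rule Bochner_Integration.integrable_sum)
    using exp_int(1)[OF c] by auto
  have "integral\<^sup>L lborel (psi \<theta> B T) = (\<Sum>S\<in>Pow T. (-1)^card S * (1 / (1 + W \<theta> S / W \<theta> B)))"
    unfolding eq using exp_int[OF c] by (subst Bochner_Integration.integral_sum) auto
  also have "\<dots> = G \<theta> B T"
    unfolding G_def
  proof (intro sum.cong refl)
    fix S show "(-1)^card S * (1 / (1 + W \<theta> S / W \<theta> B)) = (-1)^card S * (W \<theta> B / (W \<theta> B + W \<theta> S))"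
      using WB by (simp add: field_simps)
  qed
  finally show "integral\<^sup>L lborel (psi \<theta> B T) = G \<theta> B T" .
qed



lemma lc_meas:
  fixes f :: "real \<Rightarrow> real"
  assumes f[measurable]: "f \<in> borel_measurable lborel"
  shows "(\<lambda>c. emeasure lborel {x. c < f x}) \<in> borel_measurable lborel"
proof -
  have eq: "emeasure lborel {x. c < f x} = (\<integral>\<^sup>+x. indicator {p::real\<times>real. snd p < f (fst p)} (x, c) \<partial>lborel)" for c
  proof -
    have "{x. c < f x} \<in> sets lborel" by measurable
    hence "emeasure lborel {x. c < f x} = (\<integral>\<^sup>+x. indicator {x. c < f x} x \<partial>lborel)" by simp
    also have "\<dots> = (\<integral>\<^sup>+x. indicator {p::real\<times>real. snd p < f (fst p)} (x, c) \<partial>lborel)"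
      by (intro nn_integral_cong) (auto split: split_indicator)
    finally show ?thesis .
  qed
  have m: "(\<lambda>(c, x). indicator {p::real\<times>real. snd p < f (fst p)} (x, c) :: ennreal) \<in> borel_measurable (lborel \<Otimes>\<^sub>M lborel)"
    by measurable
  show ?thesis unfolding eq
    using lborel.borel_measurable_nn_integral[OF m] by simp
qed

lemma layer_cake:
  fixes f :: "real \<Rightarrow> real"
  assumes f[measurable]: "f \<in> borel_measurable lborel" and nn: "\<And>x. 0 \<le> f x"
  shows "(\<integral>\<^sup>+x. ennreal (f x) \<partial>lborel) = (\<integral>\<^sup>+c. emeasure lborel {x. c < f x} * indicator {0<..} c \<partial>lborel)"
proof -
  define F where "F x c = (indicator {p::real\<times>real. 0 < snd p \<and> snd p < f (fst p)} (x, c) :: ennreal)" for x c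
  have Fm: "case_prod F \<in> borel_measurable (lborel \<Otimes>\<^sub>M lborel)"
    unfolding F_def by measurable
  have 1: "ennreal (f x) = (\<integral>\<^sup>+c. F x c \<partial>lborel)" for x
  proof -
    have "(\<integral>\<^sup>+c. F x c \<partial>lborel) = (\<integral>\<^sup>+c. indicator {0<..<f x} c \<partial>lborel)"
      unfolding F_def by (intro nn_integral_cong) (auto split: split_indicator)
    also have "\<dots> = ennreal (f x)" using nn[of x] by simp
    finally show ?thesis ..
  qed
  have 2: "(\<integral>\<^sup>+x. F x c \<partial>lborel) = emeasure lborel {x. c < f x} * indicator {0<..} c" for c
  proof -
    have "{x. c < f x} \<in> sets lborel" by measurable
    hence "(\<integral>\<^sup>+x. indicator {x. c < f x} x * indicator {0<..} c \<partial>lborel) = emeasure lborel {x. c < f x} * indicator {0<..} c"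
      by (simp add: nn_integral_multc)
    moreover have "(\<integral>\<^sup>+x. F x c \<partial>lborel) = (\<integral>\<^sup>+x. indicator {x. c < f x} x * indicator {0<..} c \<partial>lborel)"
      unfolding F_def by (intro nn_integral_cong) (auto split: split_indicator)
    ultimately show ?thesis by simp
  qed
  have "(\<integral>\<^sup>+x. ennreal (f x) \<partial>lborel) = (\<integral>\<^sup>+x. (\<integral>\<^sup>+c. F x c \<partial>lborel) \<partial>lborel)"
    using 1 by simp
  also have "\<dots> = (\<integral>\<^sup>+c. (\<integral>\<^sup>+x. F x c \<partial>lborel) \<partial>lborel)"
    by (rule lborel_pair.Fubini'[OF Fm, symmetric])
  also have "\<dots> = (\<integral>\<^sup>+c. emeasure lborel {x. c < f x} * indicator {0<..} c \<partial>lborel)"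
    using 2 by simp
  finally show ?thesis .
qed



definition ivl :: "real set \<Rightarrow> bool" where
  "ivl S \<longleftrightarrow> (\<forall>s\<in>S. \<forall>t\<in>S. \<forall>x. s \<le> x \<and> x \<le> t \<longrightarrow> x \<in> S)"

lemma ennreal_nat_le_bound:
  assumes "\<And>n::nat. ennreal (real n) \<le> X" shows "X = \<infinity>"
proof (rule ccontr)
  assume "X \<noteq> \<infinity>"
  then obtain r where r: "X = ennreal r" "0 \<le> r" by (cases X) auto
  obtain n :: nat where n: "r < real n" using reals_Archimedean2 by blast
  have "ennreal (real n) \<le> ennreal r" using assms[of n] r by simp
  hence "real n \<le> r" using r(2) ennreal_le_iff by blast
  thus False using n by linarith
qed
lemma ivl_bdd:
  assumes iv: "ivl S" and a: "a \<in> S" and Sm: "S \<in> sets lborel" and fin: "emeasure lborel S < \<infinity>"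
  shows "bdd_above S" "bdd_below S"
proof -
  show "bdd_above S"
  proof (rule ccontr)
    assume nb: "\<not> bdd_above S"
    have "ennreal (real n) \<le> emeasure lborel S" for n :: nat
    proof -
      have "{a..a + real n} \<subseteq> S"
      proof
        fix x assume x: "x \<in> {a..a + real n}"
        have "\<not> (\<forall>x\<in>S. x \<le> a + real n)" using nb unfolding bdd_above_def by blast
        then obtain s where s: "s \<in> S" "a + real n < s" by (auto simp: not_le)
        have "a \<le> x" "x \<le> s" using x s by auto
        thus "x \<in> S" using iv a s(1) unfolding ivl_def by blast
      qed
      hence "emeasure lborel {a..a + real n} \<le> emeasure lborel S" by (rule emeasure_mono[OF _ Sm])
      thus ?thesis by simp
    qed
    hence "emeasure lborel S = \<infinity>" by (rule ennreal_nat_le_bound)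
    thus False using fin by simp
  qed
  show "bdd_below S"
  proof (rule ccontr)
    assume nb: "\<not> bdd_below S"
    have "ennreal (real n) \<le> emeasure lborel S" for n :: nat
    proof -
      have "{a - real n..a} \<subseteq> S"
      proof
        fix x assume x: "x \<in> {a - real n..a}"
        have "\<not> (\<forall>x\<in>S. a - real n \<le> x)" using nb unfolding bdd_below_def by blast
        then obtain s where s: "s \<in> S" "s < a - real n" by (auto simp: not_le)
        have "s \<le> x" "x \<le> a" using x s by auto
        thus "x \<in> S" using iv a s(1) unfolding ivl_def by blast
      qed
      hence "emeasure lborel {a - real n..a} \<le> emeasure lborel S" by (rule emeasure_mono[OF _ Sm])
      thus ?thesis by simp
    qed
    hence "emeasure lborel S = \<infinity>" by (rule ennreal_nat_le_bound)
    thus False using fin by simp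
  qed
qed

lemma ivl_open_sub:
  assumes iv: "ivl S" and ne: "S \<noteq> {}" and ba: "bdd_above S" and bb: "bdd_below S"
  shows "{Inf S<..<Sup S} \<subseteq> S"
proof
  fix y assume y: "y \<in> {Inf S<..<Sup S}"
  obtain s where "s \<in> S" "s < y" using y cInf_less_iff[OF ne bb] by auto
  moreover obtain u where "u \<in> S" "y < u" using y less_cSup_iff[OF ne ba] by auto
  ultimately show "y \<in> S" using iv y unfolding ivl_def by (meson less_imp_le)
qed

lemma ivl_measure:
  assumes iv: "ivl S" and ne: "S \<noteq> {}" and ba: "bdd_above S" and bb: "bdd_below S" and Sm: "S \<in> sets lborel"
  shows "emeasure lborel S = ennreal (Sup S - Inf S)"
proof (rule antisym)
  have "S \<subseteq> {Inf S..Sup S}" using ba bb by (simp add: cInf_lower cSup_upper subsetI)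
  hence "emeasure lborel S \<le> emeasure lborel {Inf S..Sup S}" by (rule emeasure_mono) simp
  also have "\<dots> = ennreal (Sup S - Inf S)" using cInf_le_cSup[OF ne ba bb] by simp
  finally show "emeasure lborel S \<le> ennreal (Sup S - Inf S)" .
  have "emeasure lborel {Inf S<..<Sup S} \<le> emeasure lborel S"
    by (rule emeasure_mono[OF ivl_open_sub[OF assms(1-4)] Sm])
  thus "ennreal (Sup S - Inf S) \<le> emeasure lborel S" using cInf_le_cSup[OF ne ba bb] by simp
qed

lemma ivl_pt:
  assumes iv: "ivl S" and ne: "S \<noteq> {}" and ba: "bdd_above S" and bb: "bdd_below S"
    and t: "0 < t" "t < 1"
  shows "Inf S + t * (Sup S - Inf S) \<in> S"
proof (cases "Inf S < Sup S")
  case True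
  have "Inf S + t * (Sup S - Inf S) \<in> {Inf S<..<Sup S}"
  proof -
    have "0 < t * (Sup S - Inf S)" using True t by simp
    moreover have "t * (Sup S - Inf S) < 1 * (Sup S - Inf S)"
      using True t by (intro mult_strict_right_mono) auto
    ultimately show ?thesis by simp
  qed
  thus ?thesis using ivl_open_sub[OF assms(1-4)] by auto
next
  case False
  hence eq: "Inf S = Sup S" using cInf_le_cSup[OF ne ba bb] by simp
  obtain a where a: "a \<in> S" using ne by auto
  have "Inf S \<le> a" "a \<le> Sup S" using a ba bb by (simp_all add: cInf_lower cSup_upper)
  hence "a = Inf S" using eq by simp
  thus ?thesis using a eq by simp
qed



lemma level_props:
  fixes \<phi> :: "real \<Rightarrow> real"
  assumes m[measurable]: "\<phi> \<in> borel_measurable lborel"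
    and q: "\<And>s x t. s \<le> x \<Longrightarrow> x \<le> t \<Longrightarrow> min (\<phi> s) (\<phi> t) \<le> \<phi> x"
    and fin: "(\<integral>\<^sup>+x. ennreal (\<phi> x) \<partial>lborel) < \<infinity>"
    and c: "0 < c" and ex: "\<exists>x. c < \<phi> x"
  shows "{x. c < \<phi> x} \<in> sets lborel" "{x. c < \<phi> x} \<noteq> {}" "ivl {x. c < \<phi> x}"
    "emeasure lborel {x. c < \<phi> x} < \<infinity>"
proof -
  show Sm: "{x. c < \<phi> x} \<in> sets lborel" by measurable
  show "{x. c < \<phi> x} \<noteq> {}" using ex by auto
  show "ivl {x. c < \<phi> x}" unfolding ivl_def
  proof (intro ballI allI impI)
    fix s t x assume "s \<in> {x. c < \<phi> x}" "t \<in> {x. c < \<phi> x}" "s \<le> x \<and> x \<le> t"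
    thus "x \<in> {x. c < \<phi> x}" using q[of s x t] by auto
  qed
  have "ennreal c * emeasure lborel {x. c < \<phi> x} = (\<integral>\<^sup>+x. ennreal c * indicator {x. c < \<phi> x} x \<partial>lborel)"
    using Sm by (simp add: nn_integral_cmult_indicator)
  also have "\<dots> \<le> (\<integral>\<^sup>+x. ennreal (\<phi> x) \<partial>lborel)"
    by (intro nn_integral_mono) (auto split: split_indicator intro: ennreal_leI)
  also have "\<dots> < \<infinity>" by (rule fin)
  finally have "ennreal c * emeasure lborel {x. c < \<phi> x} < \<infinity>" .
  thus "emeasure lborel {x. c < \<phi> x} < \<infinity>"
    using c by (auto simp: ennreal_mult_less_top top_unique)
qed

lemma level_key:
  fixes f g h :: "real \<Rightarrow> real" and lam c :: real
  assumes lam: "0 < lam" "lam < 1" and c: "0 < c"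
    and Sf: "{x. c < f x} \<in> sets lborel" "{x. c < f x} \<noteq> {}" "ivl {x. c < f x}" "emeasure lborel {x. c < f x} < \<infinity>"
    and Sg: "{x. c < g x} \<in> sets lborel" "{x. c < g x} \<noteq> {}" "ivl {x. c < g x}" "emeasure lborel {x. c < g x} < \<infinity>"
    and Sh: "{x. c < h x} \<in> sets lborel"
    and fnn: "\<And>x. 0 \<le> f x" and gnn: "\<And>x. 0 \<le> g x"
    and H: "\<And>s t. f s powr (1-lam) * g t powr lam \<le> h ((1-lam) * s + lam * t)"
  shows "ennreal (1-lam) * emeasure lborel {x. c < f x} + ennreal lam * emeasure lborel {x. c < g x}
         \<le> emeasure lborel {x. c < h x}"
proof -
  define A where "A = {x. c < f x}"
  define B where "B = {x. c < g x}"
  obtain a where a: "a \<in> A" using Sf(2) A_def by auto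
  obtain b where b: "b \<in> B" using Sg(2) B_def by auto
  have bA: "bdd_above A" "bdd_below A" using ivl_bdd[OF Sf(3) a[unfolded A_def] Sf(1) Sf(4)] A_def by auto
  have bB: "bdd_above B" "bdd_below B" using ivl_bdd[OF Sg(3) b[unfolded B_def] Sg(1) Sg(4)] B_def by auto
  have iA: "ivl A" "A \<noteq> {}" using Sf A_def by auto
  have iB: "ivl B" "B \<noteq> {}" using Sg B_def by auto
  have mA: "emeasure lborel A = ennreal (Sup A - Inf A)"
    using ivl_measure[OF iA bA] Sf(1) A_def by auto
  have mB: "emeasure lborel B = ennreal (Sup B - Inf B)"
    using ivl_measure[OF iB bB] Sg(1) B_def by auto
  have dA: "Inf A \<le> Sup A" by (rule cInf_le_cSup[OF iA(2) bA(1) bA(2)])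
  have dB: "Inf B \<le> Sup B" by (rule cInf_le_cSup[OF iB(2) bB(1) bB(2)])
  define lo where "lo = (1-lam) * Inf A + lam * Inf B"
  define hi where "hi = (1-lam) * Sup A + lam * Sup B"
  define D where "D = (1-lam) * (Sup A - Inf A) + lam * (Sup B - Inf B)"
  have D_eq: "hi - lo = D" unfolding hi_def lo_def D_def by (simp add: algebra_simps)
  have sub: "{lo<..<hi} \<subseteq> {x. c < h x}"
  proof
    fix y assume y: "y \<in> {lo<..<hi}"
    hence Dp: "D > 0" using D_eq by simp
    define t where "t = (y - lo) / D"
    have t: "0 < t" "t < 1" using y Dp D_eq unfolding t_def by (auto simp: field_simps)
    define s where "s = Inf A + t * (Sup A - Inf A)"
    define u where "u = Inf B + t * (Sup B - Inf B)"
    have sA: "s \<in> A" unfolding s_def by (rule ivl_pt[OF iA bA t])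
    have uB: "u \<in> B" unfolding u_def by (rule ivl_pt[OF iB bB t])
    have yeq: "(1-lam) * s + lam * u = y"
    proof -
      have "(1-lam) * s + lam * u = lo + t * D" unfolding s_def u_def lo_def D_def by (simp add: algebra_simps)
      also have "\<dots> = y" unfolding t_def using Dp by simp
      finally show ?thesis .
    qed
    have fs: "c < f s" and gu: "c < g u" using sA uB A_def B_def by auto
    have "c powr (1-lam) < f s powr (1-lam)" using fs c lam by (intro powr_less_mono2) auto
    moreover have "c powr lam < g u powr lam" using gu c lam by (intro powr_less_mono2) auto
    ultimately have "c powr (1-lam) * c powr lam < f s powr (1-lam) * g u powr lam"
      using c by (intro mult_strict_mono) auto
    moreover have "c powr (1-lam) * c powr lam = c" using c by (simp add: powr_add[symmetric])
    ultimately have "c < f s powr (1-lam) * g u powr lam" by simp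
    also have "\<dots> \<le> h y" using H[of s u] yeq by simp
    finally show "y \<in> {x. c < h x}" by simp
  qed
  have "emeasure lborel {lo<..<hi} \<le> emeasure lborel {x. c < h x}"
    by (rule emeasure_mono[OF sub Sh])
  moreover have "emeasure lborel {lo<..<hi} = ennreal D"
  proof -
    have "0 \<le> D" unfolding D_def using dA dB lam by simp
    thus ?thesis using D_eq by simp
  qed
  moreover have "ennreal D = ennreal (1-lam) * emeasure lborel A + ennreal lam * emeasure lborel B"
  proof -
    have "ennreal D = ennreal ((1-lam) * (Sup A - Inf A)) + ennreal (lam * (Sup B - Inf B))"
      unfolding D_def using dA dB lam by (intro ennreal_plus) auto
    also have "ennreal ((1-lam) * (Sup A - Inf A)) = ennreal (1-lam) * ennreal (Sup A - Inf A)"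
      using dA lam by (intro ennreal_mult) auto
    also have "ennreal (lam * (Sup B - Inf B)) = ennreal lam * ennreal (Sup B - Inf B)"
      using dB lam by (intro ennreal_mult) auto
    finally show ?thesis unfolding mA mB .
  qed
  ultimately show ?thesis unfolding A_def B_def by simp
qed



lemma PL_core:
  fixes f g h :: "real \<Rightarrow> real" and lam :: real
  assumes lam: "0 < lam" "lam < 1"
    and fm[measurable]: "f \<in> borel_measurable lborel"
    and gm[measurable]: "g \<in> borel_measurable lborel"
    and hm[measurable]: "h \<in> borel_measurable lborel"
    and fnn: "\<And>x. 0 \<le> f x" and gnn: "\<And>x. 0 \<le> g x" and hnn: "\<And>x. 0 \<le> h x"
    and fle: "\<And>x. f x \<le> 1" and gle: "\<And>x. g x \<le> 1"
    and fsup: "\<And>c. c < 1 \<Longrightarrow> \<exists>x. c < f x" and gsup: "\<And>c. c < 1 \<Longrightarrow> \<exists>x. c < g x"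
    and fq: "\<And>s x t. s \<le> x \<Longrightarrow> x \<le> t \<Longrightarrow> min (f s) (f t) \<le> f x"
    and gq: "\<And>s x t. s \<le> x \<Longrightarrow> x \<le> t \<Longrightarrow> min (g s) (g t) \<le> g x"
    and fint: "(\<integral>\<^sup>+x. ennreal (f x) \<partial>lborel) < \<infinity>"
    and gint: "(\<integral>\<^sup>+x. ennreal (g x) \<partial>lborel) < \<infinity>"
    and H: "\<And>s t. f s powr (1-lam) * g t powr lam \<le> h ((1-lam) * s + lam * t)"
  shows "ennreal (1-lam) * (\<integral>\<^sup>+x. ennreal (f x) \<partial>lborel) + ennreal lam * (\<integral>\<^sup>+x. ennreal (g x) \<partial>lborel)
         \<le> (\<integral>\<^sup>+x. ennreal (h x) \<partial>lborel)"
proof -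
  define mf where "mf c = emeasure lborel {x. c < f x}" for c
  define mg where "mg c = emeasure lborel {x. c < g x}" for c
  define mh where "mh c = emeasure lborel {x. c < h x}" for c
  have mfm[measurable]: "mf \<in> borel_measurable lborel" unfolding mf_def by (rule lc_meas[OF fm])
  have mgm[measurable]: "mg \<in> borel_measurable lborel" unfolding mg_def by (rule lc_meas[OF gm])
  have key: "ennreal (1-lam) * mf c + ennreal lam * mg c \<le> mh c" if c: "0 < c" "c < 1" for c
  proof -
    note pf = level_props[OF fm fq fint c(1) fsup[OF c(2)]]
    note pg = level_props[OF gm gq gint c(1) gsup[OF c(2)]]
    have Sh: "{x. c < h x} \<in> sets lborel" by measurable
    show ?thesis unfolding mf_def mg_def mh_def
      by (rule level_key[OF lam c(1) pf pg Sh fnn gnn H])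
  qed
  have If: "(\<integral>\<^sup>+x. ennreal (f x) \<partial>lborel) = (\<integral>\<^sup>+c. mf c * indicator {0<..<1} c \<partial>lborel)"
  proof -
    have "(\<integral>\<^sup>+x. ennreal (f x) \<partial>lborel) = (\<integral>\<^sup>+c. mf c * indicator {0<..} c \<partial>lborel)"
      unfolding mf_def by (rule layer_cake[OF fm fnn])
    also have "\<dots> = (\<integral>\<^sup>+c. mf c * indicator {0<..<1} c \<partial>lborel)"
    proof (intro nn_integral_cong)
      fix c :: real
      show "mf c * indicator {0<..} c = mf c * indicator {0<..<1} c"
      proof (cases "c < 1")
        case False
        have "\<not> c < f x" for x using fle[of x] False by linarith
        hence "{x. c < f x} = {}" by blast
        thus ?thesis using False unfolding mf_def by (simp split: split_indicator)
      qed (simp split: split_indicator)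
    qed
    finally show ?thesis .
  qed
  have Ig: "(\<integral>\<^sup>+x. ennreal (g x) \<partial>lborel) = (\<integral>\<^sup>+c. mg c * indicator {0<..<1} c \<partial>lborel)"
  proof -
    have "(\<integral>\<^sup>+x. ennreal (g x) \<partial>lborel) = (\<integral>\<^sup>+c. mg c * indicator {0<..} c \<partial>lborel)"
      unfolding mg_def by (rule layer_cake[OF gm gnn])
    also have "\<dots> = (\<integral>\<^sup>+c. mg c * indicator {0<..<1} c \<partial>lborel)"
    proof (intro nn_integral_cong)
      fix c :: real
      show "mg c * indicator {0<..} c = mg c * indicator {0<..<1} c"
      proof (cases "c < 1")
        case False
        have "\<not> c < g x" for x using gle[of x] False by linarith
        hence "{x. c < g x} = {}" by blast
        thus ?thesis using False unfolding mg_def by (simp split: split_indicator)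
      qed (simp split: split_indicator)
    qed
    finally show ?thesis .
  qed
  have "ennreal (1-lam) * (\<integral>\<^sup>+x. ennreal (f x) \<partial>lborel) + ennreal lam * (\<integral>\<^sup>+x. ennreal (g x) \<partial>lborel)
      = (\<integral>\<^sup>+c. ennreal (1-lam) * (mf c * indicator {0<..<1} c) + ennreal lam * (mg c * indicator {0<..<1} c) \<partial>lborel)"
    unfolding If Ig
    by (subst nn_integral_add) (auto simp: nn_integral_cmult)
  also have "\<dots> \<le> (\<integral>\<^sup>+c. mh c * indicator {0<..} c \<partial>lborel)"
  proof (intro nn_integral_mono)
    fix c :: real
    show "ennreal (1-lam) * (mf c * indicator {0<..<1} c) + ennreal lam * (mg c * indicator {0<..<1} c)
          \<le> mh c * indicator {0<..} c"
    proof (cases "0 < c \<and> c < 1")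
      case True thus ?thesis using key[of c] by simp
    next
      case False thus ?thesis by (simp add: indicator_def)
    qed
  qed
  also have "\<dots> = (\<integral>\<^sup>+x. ennreal (h x) \<partial>lborel)"
    unfolding mh_def by (rule layer_cake[OF hm hnn, symmetric])
  finally show ?thesis .
qed



lemma PL_real:
  fixes f g h :: "real \<Rightarrow> real" and lam :: real
  assumes lam: "0 < lam" "lam < 1"
    and fm[measurable]: "f \<in> borel_measurable lborel"
    and gm[measurable]: "g \<in> borel_measurable lborel"
    and hm[measurable]: "h \<in> borel_measurable lborel"
    and fnn: "\<And>x. 0 \<le> f x" and gnn: "\<And>x. 0 \<le> g x" and hnn: "\<And>x. 0 \<le> h x"
    and fi: "integrable lborel f" and gi: "integrable lborel g" and hi: "integrable lborel h"
    and fb: "\<And>x. f x \<le> 1" and gb: "\<And>x. g x \<le> 1"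
    and fpos: "\<exists>x. 0 < f x" and gpos: "\<exists>x. 0 < g x"
    and fq: "\<And>s x t. s \<le> x \<Longrightarrow> x \<le> t \<Longrightarrow> min (f s) (f t) \<le> f x"
    and gq: "\<And>s x t. s \<le> x \<Longrightarrow> x \<le> t \<Longrightarrow> min (g s) (g t) \<le> g x"
    and H: "\<And>s t. f s powr (1-lam) * g t powr lam \<le> h ((1-lam) * s + lam * t)"
  shows "(integral\<^sup>L lborel f) powr (1-lam) * (integral\<^sup>L lborel g) powr lam \<le> integral\<^sup>L lborel h"
proof -
  define Mf where "Mf = Sup (range f)"
  define Mg where "Mg = Sup (range g)"
  have bf: "bdd_above (range f)" using fb by (intro bdd_aboveI[of _ 1]) auto
  have bg: "bdd_above (range g)" using gb by (intro bdd_aboveI[of _ 1]) auto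
  have fleM: "f x \<le> Mf" for x unfolding Mf_def using bf by (simp add: cSup_upper)
  have gleM: "g x \<le> Mg" for x unfolding Mg_def using bg by (simp add: cSup_upper)
  have Mfp: "Mf > 0" using fpos fleM by (meson less_le_trans)
  have Mgp: "Mg > 0" using gpos gleM by (meson less_le_trans)
  define f' where "f' x = f x / Mf" for x
  define g' where "g' x = g x / Mg" for x
  define K where "K = Mf powr (1-lam) * Mg powr lam"
  have Kp: "K > 0" unfolding K_def using Mfp Mgp by simp
  define h' where "h' x = h x / K" for x
  have f'm[measurable]: "f' \<in> borel_measurable lborel" unfolding f'_def by measurable
  have g'm[measurable]: "g' \<in> borel_measurable lborel" unfolding g'_def by measurable
  have h'm[measurable]: "h' \<in> borel_measurable lborel" unfolding h'_def by measurable
  have f'i: "integrable lborel f'" unfolding f'_def using fi by simp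
  have g'i: "integrable lborel g'" unfolding g'_def using gi by simp
  have h'i: "integrable lborel h'" unfolding h'_def using hi by simp
  have f'nn: "0 \<le> f' x" for x unfolding f'_def using fnn[of x] Mfp by simp
  have g'nn: "0 \<le> g' x" for x unfolding g'_def using gnn[of x] Mgp by simp
  have h'nn: "0 \<le> h' x" for x unfolding h'_def using hnn[of x] Kp by simp
  have f'le: "f' x \<le> 1" for x unfolding f'_def using fleM[of x] Mfp by simp
  have g'le: "g' x \<le> 1" for x unfolding g'_def using gleM[of x] Mgp by simp
  have f'sup: "\<exists>x. c < f' x" if "c < 1" for c
  proof -
    have "c * Mf < Mf" using that Mfp by simp
    hence "\<exists>y\<in>range f. c * Mf < y" unfolding Mf_def using bf by (simp add: less_cSup_iff)
    then obtain x where "c * Mf < f x" by auto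
    thus ?thesis unfolding f'_def using Mfp by (auto simp: field_simps)
  qed
  have g'sup: "\<exists>x. c < g' x" if "c < 1" for c
  proof -
    have "c * Mg < Mg" using that Mgp by simp
    hence "\<exists>y\<in>range g. c * Mg < y" unfolding Mg_def using bg by (simp add: less_cSup_iff)
    then obtain x where "c * Mg < g x" by auto
    thus ?thesis unfolding g'_def using Mgp by (auto simp: field_simps)
  qed
  have minq: "min (a / M) (b / M) \<le> c / M" if "min a b \<le> c" "M > 0" for a b c M :: real
  proof -
    have d: "min a b / M \<le> c / M" using that by (simp add: divide_right_mono)
    have "min a b = a \<or> min a b = b" by (simp add: min_def)
    thus ?thesis using d by (metis min.cobounded1 min.cobounded2 order_trans)
  qed
  have f'q: "min (f' s) (f' t) \<le> f' x" if "s \<le> x" "x \<le> t" for s x t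
    unfolding f'_def by (rule minq[OF fq[OF that] Mfp])
  have g'q: "min (g' s) (g' t) \<le> g' x" if "s \<le> x" "x \<le> t" for s x t
    unfolding g'_def by (rule minq[OF gq[OF that] Mgp])
  have nnint: "(\<integral>\<^sup>+x. ennreal (\<phi> x) \<partial>lborel) = ennreal (integral\<^sup>L lborel \<phi>)"
    if "integrable lborel \<phi>" "\<And>x. 0 \<le> \<phi> x" for \<phi> :: "real \<Rightarrow> real"
    using that by (intro nn_integral_eq_integral) auto
  have H': "f' s powr (1-lam) * g' t powr lam \<le> h' ((1-lam) * s + lam * t)" for s t
  proof -
    have "f' s powr (1-lam) * g' t powr lam = (f s powr (1-lam) * g t powr lam) / K"
      unfolding f'_def g'_def K_def using fnn[of s] gnn[of t] Mfp Mgp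
      by (simp add: powr_divide)
    also have "\<dots> \<le> h ((1-lam) * s + lam * t) / K" using H[of s t] Kp by (simp add: divide_right_mono)
    finally show ?thesis unfolding h'_def .
  qed
  have core: "ennreal (1-lam) * ennreal (integral\<^sup>L lborel f') + ennreal lam * ennreal (integral\<^sup>L lborel g')
         \<le> ennreal (integral\<^sup>L lborel h')"
    using PL_core[OF lam f'm g'm h'm f'nn g'nn h'nn f'le g'le f'sup g'sup f'q g'q _ _ H']
      nnint[OF f'i f'nn] nnint[OF g'i g'nn] nnint[OF h'i h'nn] by simp
  define If where "If = integral\<^sup>L lborel f"
  define Ig where "Ig = integral\<^sup>L lborel g"
  define Ih where "Ih = integral\<^sup>L lborel h"
  have If': "integral\<^sup>L lborel f' = If / Mf" unfolding f'_def If_def by simp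
  have Ig': "integral\<^sup>L lborel g' = Ig / Mg" unfolding g'_def Ig_def by simp
  have Ih': "integral\<^sup>L lborel h' = Ih / K" unfolding h'_def Ih_def by simp
  have Ifn: "0 \<le> If" unfolding If_def using fnn by simp
  have Ign: "0 \<le> Ig" unfolding Ig_def using gnn by simp
  have Ihn: "0 \<le> Ih" unfolding Ih_def using hnn by simp
  have lin: "(1-lam) * (If / Mf) + lam * (Ig / Mg) \<le> Ih / K"
  proof -
    have "ennreal ((1-lam) * (If / Mf) + lam * (Ig / Mg)) = ennreal (1-lam) * ennreal (If / Mf) + ennreal lam * ennreal (Ig / Mg)"
    proof -
      have a: "0 \<le> If / Mf" "0 \<le> Ig / Mg" using Ifn Ign Mfp Mgp by auto
      have "ennreal ((1-lam) * (If / Mf) + lam * (Ig / Mg)) = ennreal ((1-lam) * (If / Mf)) + ennreal (lam * (Ig / Mg))"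
        using a lam by (intro ennreal_plus mult_nonneg_nonneg) auto
      also have "\<dots> = ennreal (1-lam) * ennreal (If / Mf) + ennreal lam * ennreal (Ig / Mg)"
        using a lam by (simp only: ennreal_mult[symmetric])
      finally show ?thesis .
    qed
    also have "\<dots> \<le> ennreal (Ih / K)" using core If' Ig' Ih' by simp
    finally show ?thesis using Ihn Kp by (simp add: ennreal_le_iff)
  qed
  show ?thesis
  proof (cases "If = 0 \<or> Ig = 0")
    case True thus ?thesis using Ihn lam unfolding If_def Ig_def Ih_def by auto
  next
    case False
    hence pos: "0 < If / Mf" "0 < Ig / Mg" using Ifn Ign Mfp Mgp by auto
    have "(If / Mf) powr (1-lam) * (Ig / Mg) powr lam \<le> (1-lam) * (If / Mf) + lam * (Ig / Mg)"
      using Youngs_inequality_0[of "1-lam" lam "If / Mf" "Ig / Mg"] lam pos by simp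
    also have "\<dots> \<le> Ih / K" by (rule lin)
    finally have "(If / Mf) powr (1-lam) * (Ig / Mg) powr lam \<le> Ih / K" .
    moreover have "(If / Mf) powr (1-lam) * (Ig / Mg) powr lam = (If powr (1-lam) * Ig powr lam) / K"
      unfolding K_def using Ifn Ign Mfp Mgp by (simp add: powr_divide)
    ultimately have "(If powr (1-lam) * Ig powr lam) / K \<le> Ih / K" by simp
    hence "If powr (1-lam) * Ig powr lam \<le> Ih" using Kp by (simp add: divide_le_cancel)
    thus ?thesis unfolding If_def Ig_def Ih_def .
  qed
qed



lemma exp_conv:
  fixes a b t :: real assumes "0 \<le> t" "t \<le> 1"
  shows "exp ((1-t)*a + t*b) \<le> (1-t)*exp a + t*exp b"
  using convex_onD[OF exp_convex, of t a b] assms by simp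

definition h0 :: "real \<Rightarrow> real" where "h0 z = ln (1 - exp (- exp z))"

lemma h0_arg_pos: "0 < 1 - exp (- exp (z::real))"
proof -
  have "exp (- exp z) < 1" by simp
  thus ?thesis by simp
qed

lemma h0_mono: "(a::real) \<le> b \<Longrightarrow> h0 a \<le> h0 b"
  unfolding h0_def using h0_arg_pos[of a] h0_arg_pos[of b] by simp

lemma h0_deriv: "(h0 has_real_derivative (exp z / (exp (exp z) - 1))) (at z)"
proof -
  have d: "(h0 has_real_derivative (- (exp (- exp z) * (- exp z))) / (1 - exp (- exp z))) (at z)"
    unfolding h0_def using h0_arg_pos[of z] by (auto intro!: derivative_eq_intros)
  have p: "exp (exp z) - 1 > 0" by simp
  have "(- (exp (- exp z) * (- exp z))) / (1 - exp (- exp z)) = exp z / (exp (exp z) - 1)"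
    using h0_arg_pos[of z] p by (simp add: exp_minus field_simps)
  thus ?thesis using d by simp
qed

lemma slope_mono:
  fixes y1 y2 :: real assumes "0 < y1" "y1 \<le> y2"
  shows "y2 / (exp y2 - 1) \<le> y1 / (exp y1 - 1)"
proof -
  define t where "t = y1 / y2"
  have t: "0 \<le> t" "t \<le> 1" using assms unfolding t_def by auto
  have "exp ((1-t)*0 + t*y2) \<le> (1-t)*exp 0 + t*exp y2" by (rule exp_conv[OF t])
  moreover have "t * y2 = y1" unfolding t_def using assms by simp
  ultimately have "exp y1 \<le> (1-t) + t * exp y2" by simp
  hence "exp y1 - 1 \<le> (y1 / y2) * (exp y2 - 1)" unfolding t_def by (simp add: algebra_simps)
  hence *: "y2 * (exp y1 - 1) \<le> y1 * (exp y2 - 1)" using assms by (simp add: field_simps)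
  have p1: "exp y1 - 1 > 0" "exp y2 - 1 > 0" using assms by auto
  show ?thesis using * p1 by (simp add: divide_simps mult.commute)
qed

lemma h0_concave:
  fixes a b t :: real assumes "0 \<le> t" "t \<le> 1"
  shows "(1-t) * h0 a + t * h0 b \<le> h0 ((1-t)*a + t*b)"
proof -
  have "convex_on UNIV (\<lambda>z. - h0 z)"
  proof (rule convex_on_realI[where f' = "\<lambda>z. - (exp z / (exp (exp z) - 1))"])
    show "connected (UNIV :: real set)" by simp
    show "((\<lambda>z. - h0 z) has_real_derivative - (exp z / (exp (exp z) - 1))) (at z)" for z
      by (intro derivative_intros h0_deriv)
    show "- (exp x / (exp (exp x) - 1)) \<le> - (exp y / (exp (exp y) - 1))" if "x \<le> y" for x y :: real
      using slope_mono[of "exp x" "exp y"] that by simp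
  qed
  from convex_onD[OF this, of t a b] assms show ?thesis by simp
qed



lemma W_conv:
  fixes x y :: "real^'d" and t :: real
  assumes B: "finite B" "B \<noteq> {}" and t: "0 \<le> t" "t \<le> 1"
  shows "ln (W ((1-t) *\<^sub>R x + t *\<^sub>R y) B) \<le> (1-t) * ln (W x B) + t * ln (W y B)"
proof -
  define C where "C = (1-t) * ln (W x B) + t * ln (W y B)"
  have Wx: "W x B > 0" and Wy: "W y B > 0" and Wm: "W ((1-t) *\<^sub>R x + t *\<^sub>R y) B > 0"
    using W_pos[OF B] by auto
  have "(\<Sum>j\<in>B. exp ((1-t) * x$j + t * y$j - C)) \<le> (\<Sum>j\<in>B. (1-t) * (exp (x$j) / W x B) + t * (exp (y$j) / W y B))"
  proof (intro sum_mono)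
    fix j assume "j \<in> B"
    have "exp ((1-t) * x$j + t * y$j - C) = exp ((1-t) * (x$j - ln (W x B)) + t * (y$j - ln (W y B)))"
      unfolding C_def by (simp add: algebra_simps)
    also have "\<dots> \<le> (1-t) * exp (x$j - ln (W x B)) + t * exp (y$j - ln (W y B))" by (rule exp_conv[OF t])
    also have "\<dots> = (1-t) * (exp (x$j) / W x B) + t * (exp (y$j) / W y B)"
      using Wx Wy by (simp add: exp_diff)
    finally show "exp ((1-t) * x$j + t * y$j - C) \<le> (1-t) * (exp (x$j) / W x B) + t * (exp (y$j) / W y B)" .
  qed
  also have "\<dots> = (1-t) * (W x B / W x B) + t * (W y B / W y B)"
    unfolding W_def by (simp only: sum.distrib sum_distrib_left[symmetric] sum_divide_distrib[symmetric] times_divide_eq_right)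
  also have "\<dots> = 1" using Wx Wy by simp
  finally have le1: "(\<Sum>j\<in>B. exp ((1-t) * x$j + t * y$j - C)) \<le> 1" .
  have "(\<Sum>j\<in>B. exp ((1-t) * x$j + t * y$j - C)) = W ((1-t) *\<^sub>R x + t *\<^sub>R y) B / exp C"
    unfolding W_def by (simp add: exp_diff sum_divide_distrib)
  hence "W ((1-t) *\<^sub>R x + t *\<^sub>R y) B \<le> exp C" using le1 by (simp add: divide_le_eq)
  hence "ln (W ((1-t) *\<^sub>R x + t *\<^sub>R y) B) \<le> ln (exp C)" using Wm by (subst ln_le_cancel_iff) auto
  thus ?thesis unfolding C_def by simp
qed

definition Phi :: "real^'d \<Rightarrow> 'd set \<Rightarrow> 'd set \<Rightarrow> real \<Rightarrow> real" where
  "Phi \<theta> B T s = s - exp s + (\<Sum>i\<in>T. h0 (\<theta>$i - ln (W \<theta> B) + s))"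

lemma psi_exp:
  fixes \<theta> :: "real^'d"
  assumes WB: "W \<theta> B > 0" and T: "finite T"
  shows "psi \<theta> B T s = exp (Phi \<theta> B T s)"
proof -
  have "1 - exp (- (exp (\<theta> $ i) / W \<theta> B * exp s)) = exp (h0 (\<theta>$i - ln (W \<theta> B) + s))" for i
  proof -
    have "exp (\<theta> $ i) / W \<theta> B * exp s = exp (\<theta>$i - ln (W \<theta> B) + s)"
      using WB by (simp add: exp_add exp_diff)
    thus ?thesis unfolding h0_def using h0_arg_pos by simp
  qed
  hence "(\<Prod>i\<in>T. 1 - exp (- (exp (\<theta> $ i) / W \<theta> B * exp s))) = exp (\<Sum>i\<in>T. h0 (\<theta>$i - ln (W \<theta> B) + s))"
    by (simp add: exp_sum[OF T])
  thus ?thesis unfolding psi_def Phi_def by (simp add: exp_add[symmetric])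
qed

lemma Phi_joint:
  fixes x y :: "real^'d" and t s1 s2 :: real
  assumes B: "finite B" "B \<noteq> {}" and t: "0 \<le> t" "t \<le> 1"
  shows "(1-t) * Phi x B T s1 + t * Phi y B T s2 \<le> Phi ((1-t) *\<^sub>R x + t *\<^sub>R y) B T ((1-t) * s1 + t * s2)"
proof -
  define m where "m = (1-t) *\<^sub>R x + t *\<^sub>R y"
  have e: "(1-t) * (s1 - exp s1) + t * (s2 - exp s2) \<le> ((1-t) * s1 + t * s2) - exp ((1-t) * s1 + t * s2)"
    using exp_conv[OF t, of s1 s2] by (simp add: algebra_simps)
  have L: "ln (W m B) \<le> (1-t) * ln (W x B) + t * ln (W y B)" unfolding m_def by (rule W_conv[OF B t])
  have hi: "(1-t) * h0 (x$i - ln (W x B) + s1) + t * h0 (y$i - ln (W y B) + s2)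
          \<le> h0 (m$i - ln (W m B) + ((1-t) * s1 + t * s2))" for i
  proof -
    have "(1-t) * h0 (x$i - ln (W x B) + s1) + t * h0 (y$i - ln (W y B) + s2)
        \<le> h0 ((1-t) * (x$i - ln (W x B) + s1) + t * (y$i - ln (W y B) + s2))" by (rule h0_concave[OF t])
    also have "\<dots> \<le> h0 (m$i - ln (W m B) + ((1-t) * s1 + t * s2))"
      using L unfolding m_def by (intro h0_mono) (simp add: algebra_simps)
    finally show ?thesis .
  qed
  have "(1-t) * Phi x B T s1 + t * Phi y B T s2
      = ((1-t) * (s1 - exp s1) + t * (s2 - exp s2))
        + (\<Sum>i\<in>T. (1-t) * h0 (x$i - ln (W x B) + s1) + t * h0 (y$i - ln (W y B) + s2))"
  proof -
    have "(1-t) * Phi x B T s1 + t * Phi y B T s2 = ((1-t) * (s1 - exp s1) + t * (s2 - exp s2))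
       + ((1-t) * (\<Sum>i\<in>T. h0 (x$i - ln (W x B) + s1)) + t * (\<Sum>i\<in>T. h0 (y$i - ln (W y B) + s2)))"
      unfolding Phi_def by (simp add: algebra_simps)
    also have "(1-t) * (\<Sum>i\<in>T. h0 (x$i - ln (W x B) + s1)) + t * (\<Sum>i\<in>T. h0 (y$i - ln (W y B) + s2))
      = (\<Sum>i\<in>T. (1-t) * h0 (x$i - ln (W x B) + s1) + t * h0 (y$i - ln (W y B) + s2))"
      by (simp only: sum.distrib sum_distrib_left)
    finally show ?thesis .
  qed
  also have "\<dots> \<le> (((1-t) * s1 + t * s2) - exp ((1-t) * s1 + t * s2))
        + (\<Sum>i\<in>T. h0 (m$i - ln (W m B) + ((1-t) * s1 + t * s2)))"
    using e hi by (intro add_mono sum_mono) auto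
  also have "\<dots> = Phi m B T ((1-t) * s1 + t * s2)" unfolding Phi_def by simp
  finally show ?thesis unfolding m_def .
qed

lemma psi_joint:
  fixes x y :: "real^'d" and t s1 s2 :: real
  assumes B: "finite B" "B \<noteq> {}" and T: "finite T" and t: "0 \<le> t" "t \<le> 1"
  shows "psi x B T s1 powr (1-t) * psi y B T s2 powr t \<le> psi ((1-t) *\<^sub>R x + t *\<^sub>R y) B T ((1-t) * s1 + t * s2)"
proof -
  have W: "W \<theta> B > 0" for \<theta> :: "real^'d" by (rule W_pos[OF B])
  have "psi x B T s1 powr (1-t) * psi y B T s2 powr t = exp ((1-t) * Phi x B T s1 + t * Phi y B T s2)"
    unfolding psi_exp[OF W T] by (simp add: powr_def exp_add)
  also have "\<dots> \<le> exp (Phi ((1-t) *\<^sub>R x + t *\<^sub>R y) B T ((1-t) * s1 + t * s2))"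
    using Phi_joint[OF B t] by simp
  also have "\<dots> = psi ((1-t) *\<^sub>R x + t *\<^sub>R y) B T ((1-t) * s1 + t * s2)"
    unfolding psi_exp[OF W T] ..
  finally show ?thesis .
qed



lemma psi_props:
  fixes \<theta> :: "real^'d"
  assumes B: "finite B" "B \<noteq> {}" and T: "finite T"
  shows "psi \<theta> B T \<in> borel_measurable lborel"
    "\<And>s. 0 < psi \<theta> B T s" "\<And>s. psi \<theta> B T s \<le> 1"
    "\<And>s x t. s \<le> x \<Longrightarrow> x \<le> t \<Longrightarrow> min (psi \<theta> B T s) (psi \<theta> B T t) \<le> psi \<theta> B T x"
proof -
  have W: "W \<theta> B > 0" by (rule W_pos[OF B])
  show "psi \<theta> B T \<in> borel_measurable lborel" unfolding psi_def by measurable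
  show pos: "0 < psi \<theta> B T s" for s unfolding psi_exp[OF W T] by simp
  show "psi \<theta> B T s \<le> 1" for s
  proof -
    have "s - exp s \<le> 0" using exp_ge_add_one_self[of s] by linarith
    hence a: "exp (s - exp s) \<le> 1" by simp
    have q: "0 \<le> 1 - exp (- (exp (\<theta> $ i) / W \<theta> B * exp s)) \<and> 1 - exp (- (exp (\<theta> $ i) / W \<theta> B * exp s)) \<le> 1" for i
    proof -
      have "0 < exp (\<theta> $ i) / W \<theta> B * exp s" using W by simp
      hence "exp (- (exp (\<theta> $ i) / W \<theta> B * exp s)) \<le> 1" by simp
      thus ?thesis by simp
    qed
    have b: "(\<Prod>i\<in>T. 1 - exp (- (exp (\<theta> $ i) / W \<theta> B * exp s))) \<le> 1"
      by (rule prod_le_1) (use q in auto)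
    have c: "0 \<le> (\<Prod>i\<in>T. 1 - exp (- (exp (\<theta> $ i) / W \<theta> B * exp s)))"
      by (rule prod_nonneg) (use q in auto)
    show ?thesis unfolding psi_def using a b c by (metis mult_le_one exp_ge_zero)
  qed
  show "min (psi \<theta> B T s) (psi \<theta> B T t) \<le> psi \<theta> B T x" if st: "s \<le> x" "x \<le> t" for s x t
  proof (cases "s = t")
    case True thus ?thesis using st by simp
  next
    case False
    hence lt: "s < t" using st by simp
    define \<mu> where "\<mu> = (x - s) / (t - s)"
    have mu: "0 \<le> \<mu>" "\<mu> \<le> 1" unfolding \<mu>_def using st lt by (auto simp: field_simps)
    have xe: "(1-\<mu>) * s + \<mu> * t = x"
    proof -
      have "\<mu> * (t - s) = x - s" unfolding \<mu>_def using lt by simp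
      moreover have "(1-\<mu>) * s + \<mu> * t = s + \<mu> * (t - s)" by (simp add: algebra_simps)
      ultimately show ?thesis by simp
    qed
    have th: "(1-\<mu>) *\<^sub>R \<theta> + \<mu> *\<^sub>R \<theta> = \<theta>" by (simp add: scaleR_left_distrib[symmetric])
    define mn where "mn = min (psi \<theta> B T s) (psi \<theta> B T t)"
    have mnp: "0 < mn" unfolding mn_def using pos by simp
    have "mn = mn powr (1-\<mu>) * mn powr \<mu>" using mnp by (simp add: powr_add[symmetric])
    also have "\<dots> \<le> psi \<theta> B T s powr (1-\<mu>) * psi \<theta> B T t powr \<mu>"
      using mnp mu unfolding mn_def by (intro mult_mono powr_mono2) auto
    also have "\<dots> \<le> psi \<theta> B T x" using psi_joint[OF B T mu, of \<theta> s \<theta> t] th xe by simp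
    finally show ?thesis unfolding mn_def .
  qed
qed

lemma logconc:
  fixes T B :: "'d::finite set"
  assumes B: "finite B" "B \<noteq> {}" and T: "finite T"
  shows "concave_on UNIV (\<lambda>\<theta>::real^'d. ln (PL_before \<theta> B T))"
  unfolding concave_on_iff
proof (intro conjI ballI allI impI convex_UNIV)
  fix x y :: "real^'d" and u v :: real
  assume uv: "0 \<le> u" "0 \<le> v" "u + v = 1"
  have W: "W \<theta> B > 0" for \<theta> :: "real^'d" by (rule W_pos[OF B])
  have P: "PL_before \<theta> B T = integral\<^sup>L lborel (psi \<theta> B T)" for \<theta>
    using PL_eq_G[OF T W] psi_integral(2)[OF T W] by simp
  have Ppos: "PL_before \<theta> B T > 0" for \<theta>
    unfolding PL_before_def
  proof (rule sum_pos)
    show "finite (permutations_of_set T)" by simp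
    show "permutations_of_set T \<noteq> {}" using T by simp
    fix \<sigma> :: "'d list"
    have "0 < (\<Sum>c\<in>{u..<length \<sigma>}. exp (\<theta> $ (\<sigma> ! c))) + (\<Sum>i\<in>B. exp (\<theta> $ i))" for u
      using W[of \<theta>] unfolding W_def by (intro add_nonneg_pos sum_nonneg) auto
    thus "0 < (\<Prod>u<length \<sigma>. exp (\<theta> $ (\<sigma> ! u)) /
          ((\<Sum>c\<in>{u..<length \<sigma>}. exp (\<theta> $ (\<sigma> ! c))) + (\<Sum>i\<in>B. exp (\<theta> $ i))))"
      by (intro prod_pos divide_pos_pos) auto
  qed
  show "u * ln (PL_before x B T) + v * ln (PL_before y B T) \<le> ln (PL_before (u *\<^sub>R x + v *\<^sub>R y) B T)"
  proof (cases "v = 0 \<or> v = 1")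
    case True
    thus ?thesis using uv by auto
  next
    case False
    hence v: "0 < v" "v < 1" using uv by auto
    have u: "u = 1 - v" using uv by simp
    have "(integral\<^sup>L lborel (psi x B T)) powr (1-v) * (integral\<^sup>L lborel (psi y B T)) powr v
        \<le> integral\<^sup>L lborel (psi ((1-v) *\<^sub>R x + v *\<^sub>R y) B T)"
    proof (rule PL_real[OF v])
      show "psi x B T \<in> borel_measurable lborel" "psi y B T \<in> borel_measurable lborel"
        "psi ((1-v) *\<^sub>R x + v *\<^sub>R y) B T \<in> borel_measurable lborel"
        using psi_props(1)[OF B T] by auto
      show "0 \<le> psi x B T s" "0 \<le> psi y B T s" "0 \<le> psi ((1-v) *\<^sub>R x + v *\<^sub>R y) B T s" for s
        using psi_props(2)[OF B T] by (auto simp: less_imp_le)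
      show "integrable lborel (psi x B T)" "integrable lborel (psi y B T)"
        "integrable lborel (psi ((1-v) *\<^sub>R x + v *\<^sub>R y) B T)"
        using psi_integral(1)[OF T W] by auto
      show "psi x B T s \<le> 1" "psi y B T s \<le> 1" for s using psi_props(3)[OF B T] by auto
      show "\<exists>s. 0 < psi x B T s" "\<exists>s. 0 < psi y B T s" using psi_props(2)[OF B T] by auto
      show "min (psi x B T s) (psi x B T t) \<le> psi x B T z" "min (psi y B T s) (psi y B T t) \<le> psi y B T z"
        if "s \<le> z" "z \<le> t" for s z t using psi_props(4)[OF B T that] by auto
      show "psi x B T s powr (1-v) * psi y B T t powr v \<le> psi ((1-v) *\<^sub>R x + v *\<^sub>R y) B T ((1-v) * s + v * t)" for s t
        using psi_joint[OF B T, of v x s y t] v by simp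
    qed
    hence le: "PL_before x B T powr (1-v) * PL_before y B T powr v \<le> PL_before ((1-v) *\<^sub>R x + v *\<^sub>R y) B T"
      unfolding P .
    have "ln (PL_before x B T powr (1-v) * PL_before y B T powr v) \<le> ln (PL_before ((1-v) *\<^sub>R x + v *\<^sub>R y) B T)"
    proof -
      have "0 < PL_before x B T powr (1-v) * PL_before y B T powr v"
        using Ppos[of x] Ppos[of y] by simp
      thus ?thesis using le Ppos by (subst ln_le_cancel_iff) auto
    qed
    moreover have "ln (PL_before x B T powr (1-v) * PL_before y B T powr v)
        = (1-v) * ln (PL_before x B T) + v * ln (PL_before y B T)"
      using Ppos[of x] Ppos[of y] by (simp add: ln_mult ln_powr)
    ultimately show ?thesis unfolding u by simp
  qed
qed


theorem mainTheorem3: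
  fixes T B :: "'d::finite set"
    and n :: nat and ell :: "nat \<Rightarrow> nat" and e :: "nat \<Rightarrow> nat \<Rightarrow> 'd set \<times> 'd set"
  assumes "T \<noteq> {}" and "B \<noteq> {}" and "T \<inter> B = {}"
    and "\<And>j a. j \<in> {1..n} \<Longrightarrow> a \<in> {1..ell j} \<Longrightarrow>
           fst (e j a) \<noteq> {} \<and> snd (e j a) \<noteq> {} \<and> fst (e j a) \<inter> snd (e j a) = {}"
  shows "concave_on UNIV (\<lambda>\<theta>::real^'d. ln (PL_before \<theta> B T))
       \<and> concave_on UNIV (L_RB n ell e)"
proof
  show "concave_on UNIV (\<lambda>\<theta>::real^'d. ln (PL_before \<theta> B T))"
    by (rule logconc) (use assms(2) in auto)
  have edge: "concave_on UNIV (\<lambda>\<theta>::real^'d. ln (PL_edge \<theta> (e j a)))"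
    if "j \<in> {1..n}" "a \<in> {1..ell j}" for j a
    unfolding PL_edge_def by (rule logconc) (use assms(4)[OF that] in auto)
  show "concave_on UNIV (L_RB n ell e)"
    unfolding concave_on_iff
  proof (intro conjI ballI allI impI convex_UNIV)
    fix x y :: "real^'d" and u v :: real
    assume uv: "0 \<le> u" "0 \<le> v" "u + v = 1"
    have "u * L_RB n ell e x + v * L_RB n ell e y
        = (\<Sum>j=1..n. \<Sum>a=1..ell j. u * ln (PL_edge x (e j a)) + v * ln (PL_edge y (e j a)))"
      unfolding L_RB_def by (simp add: sum_distrib_left sum.distrib)
    also have "\<dots> \<le> (\<Sum>j=1..n. \<Sum>a=1..ell j. ln (PL_edge (u *\<^sub>R x + v *\<^sub>R y) (e j a)))"
    proof (intro sum_mono)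
      fix j a assume "j \<in> {1..n}" "a \<in> {1..ell j}"
      from edge[OF this] uv show "u * ln (PL_edge x (e j a)) + v * ln (PL_edge y (e j a))
          \<le> ln (PL_edge (u *\<^sub>R x + v *\<^sub>R y) (e j a))"
        unfolding concave_on_iff by blast
    qed
    also have "\<dots> = L_RB n ell e (u *\<^sub>R x + v *\<^sub>R y)" unfolding L_RB_def ..
    finally show "u * L_RB n ell e x + v * L_RB n ell e y \<le> L_RB n ell e (u *\<^sub>R x + v *\<^sub>R y)" .
  qed
qed

end
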